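(* Let $G_0$ be a fixed $n\times l$ binary matrix, $G_1$ a fixed $n\times k$ binary matrix and $\mathbf m\in\{0,1\}^k$ fixed. Then $$P(E=0)\le\sum_{u=d_0}^{n}\beta^{u}(1-\beta)^{n-u}\sum_{w=d_0}^{u}B_{0,w}\binom{n-w}{u-w}.$$
   Context: All arithmetic is over $\mathrm{GF}(2)$. $\mathcal C_0^{\perp}=\{\mathbf x\in\{0,1\}^n: G_0^T\mathbf x=\mathbf 0\}$; $B_{0,w}$ is the number of vectors of Hamming weight $w$ in $\mathcal C_0^\perp$, and $d_0$ is the minimum Hamming weight of a nonzero vector of $\mathcal C_0^\perp$. Defect model: each of the $n$ memory cells is independently defective with probability $\beta\in(0,1)$; a defective cell is stuck at $0$ or at $1$, each with probability $1/2$, independently. Let $\mathcal U$ be the set of defect positions, $U=|\mathcal U|$, $\mathbf s^{\mathcal U}$ the vector of stuck-at values. For a matrix $M$ (resp. vector $\mathbf v$) with rows indexed by $\{1,\dots,n\}$, $M^{\mathcal U}$ (resp. $\mathbf v^{\mathcal U}$) denotes the rows indexed by $\mathcal U$. Encoding: with $\mathbf b^{\mathcal U}=(G_1\mathbf m)^{\mathcal U}+\mathbf s^{\mathcal U}$, look for $\mathbf d\in\{0,1\}^l$ with $G_0^{\mathcal U}\mathbf d=\mathbf b^{\mathcal U}$; $E=1$ if such $\mathbf d$ exists and $E=0$ (encoding failure) otherwise. *)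

theory Defs
  imports Complex_Main "HOL-Library.Z2" "HOL-Library.FuncSet"
begin

(* Binary matrices: G i j :: bit with rows i < n, columns j < (l or k).
   Vectors in {0,1}^N: functions nat => bit, only indices < N matter. *)

definition mat_vec :: "(nat \<Rightarrow> nat \<Rightarrow> bit) \<Rightarrow> nat \<Rightarrow> (nat \<Rightarrow> bit) \<Rightarrow> nat \<Rightarrow> bit" where
  "mat_vec G c v i = (\<Sum>j<c. G i j * v j)"

definition dual_code :: "nat \<Rightarrow> nat \<Rightarrow> (nat \<Rightarrow> nat \<Rightarrow> bit) \<Rightarrow> (nat \<Rightarrow> bit) set" where
  "dual_code n l G0 = {x. (\<forall>i. n \<le> i \<longrightarrow> x i = 0) \<and> (\<forall>j<l. (\<Sum>i<n. G0 i j * x i) = 0)}"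

definition hweight :: "nat \<Rightarrow> (nat \<Rightarrow> bit) \<Rightarrow> nat" where
  "hweight n x = card {i. i < n \<and> x i \<noteq> 0}"

definition weight_count :: "nat \<Rightarrow> nat \<Rightarrow> (nat \<Rightarrow> nat \<Rightarrow> bit) \<Rightarrow> nat \<Rightarrow> nat" where
  "weight_count n l G0 w = card {x \<in> dual_code n l G0. hweight n x = w}"

(* d_0: minimum weight of a nonzero codeword (Inf {} = 0 if none exists) *)
definition min_dist :: "nat \<Rightarrow> nat \<Rightarrow> (nat \<Rightarrow> nat \<Rightarrow> bit) \<Rightarrow> nat" where
  "min_dist n l G0 = Inf {hweight n x | x. x \<in> dual_code n l G0 \<and> x \<noteq> (\<lambda>_. 0)}"

(* A cell configuration: c i = None (not defective) or Some s (stuck at s), for i < n. *)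
definition configs :: "nat \<Rightarrow> (nat \<Rightarrow> bit option) set" where
  "configs n = PiE {..<n} (\<lambda>_. UNIV)"

definition config_prob :: "real \<Rightarrow> nat \<Rightarrow> (nat \<Rightarrow> bit option) \<Rightarrow> real" where
  "config_prob \<beta> n c = (\<Prod>i<n. (case c i of None \<Rightarrow> 1 - \<beta> | Some _ \<Rightarrow> \<beta> / 2))"

definition encodable ::
  "nat \<Rightarrow> nat \<Rightarrow> nat \<Rightarrow> (nat \<Rightarrow> nat \<Rightarrow> bit) \<Rightarrow> (nat \<Rightarrow> nat \<Rightarrow> bit) \<Rightarrow> (nat \<Rightarrow> bit)
     \<Rightarrow> (nat \<Rightarrow> bit option) \<Rightarrow> bool" where
  "encodable n l k G0 G1 m c =
     (\<exists>d. \<forall>i<n. \<forall>s. c i = Some s \<longrightarrow> mat_vec G0 l d i = mat_vec G1 k m i + s)"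

definition fail_prob ::
  "real \<Rightarrow> nat \<Rightarrow> nat \<Rightarrow> nat \<Rightarrow> (nat \<Rightarrow> nat \<Rightarrow> bit) \<Rightarrow> (nat \<Rightarrow> nat \<Rightarrow> bit) \<Rightarrow> (nat \<Rightarrow> bit) \<Rightarrow> real" where
  "fail_prob \<beta> n l k G0 G1 m =
     (\<Sum>c\<in>configs n. if encodable n l k G0 G1 m c then 0 else config_prob \<beta> n c)"

end

theory Submission imports Defs begin

declare mult_bit_eq_and[simp del] add_bit_eq_xor[simp del]

lemma bit_add_self[simp]: "(x::bit) + x = 0"
  by (cases x) simp_all

lemma bit_UNIV: "(UNIV::bit set) = {0,1}"
  by (auto intro: bit.exhaust)

lemma fredholm:
  fixes A :: "nat \<Rightarrow> nat \<Rightarrow> bit" and b :: "nat \<Rightarrow> bit"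
  assumes "finite R"
  shows "(\<exists>d. \<forall>i\<in>R. (\<Sum>j<l. A i j * d j) = b i) \<or>
         (\<exists>y. (\<forall>j<l. (\<Sum>i\<in>R. y i * A i j) = 0) \<and> (\<Sum>i\<in>R. y i * b i) \<noteq> 0)"
  using assms
proof (induction l arbitrary: R A b)
  case 0
  show ?case
  proof (cases "\<forall>i\<in>R. b i = 0")
    case True then show ?thesis by auto
  next
    case False
    then obtain p where p: "p \<in> R" "b p \<noteq> 0" by auto
    have "(\<Sum>i\<in>R. (if i = p then 1 else 0) * b i) = b p"
    proof -
      have "(\<Sum>i\<in>R. (if i = p then 1 else 0) * b i) = (\<Sum>i\<in>R. if i = p then b i else 0)"
        by (rule sum.cong) auto
      then show ?thesis using 0 p by simp
    qed
    then show ?thesis using p by (intro disjI2 exI[of _ "\<lambda>i. if i = p then 1 else 0"]) auto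
  qed
next
  case (Suc l)
  show ?case
  proof (cases "\<forall>i\<in>R. A i l = 0")
    case True
    from Suc.IH[OF Suc.prems, of A b] show ?thesis
    proof
      assume "\<exists>d. \<forall>i\<in>R. (\<Sum>j<l. A i j * d j) = b i"
      then obtain d where d: "\<forall>i\<in>R. (\<Sum>j<l. A i j * d j) = b i" by auto
      show ?thesis
        by (rule disjI1, rule exI[of _ d]) (use d True in simp)
    next
      assume "\<exists>y. (\<forall>j<l. (\<Sum>i\<in>R. y i * A i j) = 0) \<and> (\<Sum>i\<in>R. y i * b i) \<noteq> 0"
      then obtain y where y: "\<forall>j<l. (\<Sum>i\<in>R. y i * A i j) = 0" "(\<Sum>i\<in>R. y i * b i) \<noteq> 0" by auto
      have "\<forall>j<Suc l. (\<Sum>i\<in>R. y i * A i j) = 0"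
        using y(1) True by (auto simp: less_Suc_eq)
      then show ?thesis using y(2) by blast
    qed
  next
    case False
    then obtain p where p: "p \<in> R" "A p l = 1" by auto
    define R' where "R' = R - {p}"
    define A' where "A' = (\<lambda>i j. A i j + A i l * A p j)"
    define b' where "b' = (\<lambda>i. b i + A i l * b p)"
    have fR': "finite R'" using Suc.prems by (simp add: R'_def)
    have R: "R = insert p R'" "p \<notin> R'" using p by (auto simp: R'_def)
    from Suc.IH[OF fR', of A' b'] show ?thesis
    proof
      assume "\<exists>d. \<forall>i\<in>R'. (\<Sum>j<l. A' i j * d j) = b' i"
      then obtain d where d: "\<forall>i\<in>R'. (\<Sum>j<l. A' i j * d j) = b' i" by auto
      define dl where "dl = b p + (\<Sum>j<l. A p j * d j)"
      define d2 where "d2 = d(l := dl)"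
      have e: "(\<Sum>j<Suc l. A i j * d2 j) = (\<Sum>j<l. A i j * d j) + A i l * dl" for i
        by (simp add: d2_def)
      have "\<forall>i\<in>R. (\<Sum>j<Suc l. A i j * d2 j) = b i"
      proof
        fix i assume i: "i \<in> R"
        show "(\<Sum>j<Suc l. A i j * d2 j) = b i"
        proof (cases "i = p")
          case True
          then show ?thesis using p unfolding e dl_def by (simp add: add.assoc[symmetric])
        next
          case False
          then have "i \<in> R'" using i by (simp add: R'_def)
          then have "(\<Sum>j<l. A' i j * d j) = b' i" using d by auto
          then have "(\<Sum>j<l. A i j * d j) + A i l * (\<Sum>j<l. A p j * d j) = b i + A i l * b p"
            by (simp add: A'_def b'_def algebra_simps sum.distrib sum_distrib_left)
          then show ?thesis
            unfolding e dl_def by (simp add: algebra_simps)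
        qed
      qed
      then show ?thesis by blast
    next
      assume "\<exists>y. (\<forall>j<l. (\<Sum>i\<in>R'. y i * A' i j) = 0) \<and> (\<Sum>i\<in>R'. y i * b' i) \<noteq> 0"
      then obtain y where y: "\<forall>j<l. (\<Sum>i\<in>R'. y i * A' i j) = 0" "(\<Sum>i\<in>R'. y i * b' i) \<noteq> 0" by auto
      define yp where "yp = (\<Sum>i\<in>R'. y i * A i l)"
      define y2 where "y2 = y(p := yp)"
      have s: "(\<Sum>i\<in>R. y2 i * f i) = (\<Sum>i\<in>R'. y i * f i) + yp * f p" for f
      proof -
        have "(\<Sum>i\<in>R'. y2 i * f i) = (\<Sum>i\<in>R'. y i * f i)"
          using R(2) by (intro sum.cong) (auto simp: y2_def)
        then show ?thesis using R fR' by (simp add: y2_def add.commute)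
      qed
      have "\<forall>j<Suc l. (\<Sum>i\<in>R. y2 i * A i j) = 0"
      proof (intro allI impI)
        fix j assume "j < Suc l"
        then consider "j < l" | "j = l" by linarith
        then show "(\<Sum>i\<in>R. y2 i * A i j) = 0"
        proof cases
          case 1
          have "(\<Sum>i\<in>R'. y i * A' i j) = (\<Sum>i\<in>R'. y i * A i j) + yp * A p j"
            by (simp add: A'_def yp_def algebra_simps sum.distrib sum_distrib_left)
          then show ?thesis using y(1) 1 by (simp add: s)
        next
          case 2
          then show ?thesis using p by (simp add: s yp_def)
        qed
      qed
      moreover have "(\<Sum>i\<in>R. y2 i * b i) \<noteq> 0"
      proof -
        have "(\<Sum>i\<in>R'. y i * b' i) = (\<Sum>i\<in>R'. y i * b i) + yp * b p"
          by (simp add: b'_def yp_def algebra_simps sum.distrib sum_distrib_left)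
        then show ?thesis using y(2) by (simp add: s)
      qed
      ultimately show ?thesis by blast
    qed
  qed
qed

lemma finite_dual: "finite (dual_code n l G0)"
proof -
  have "dual_code n l G0 \<subseteq> (\<lambda>f i. if i < n then f i else 0) ` (PiE {..<n} (\<lambda>_. UNIV :: bit set))"
  proof
    fix x assume x: "x \<in> dual_code n l G0"
    have "x = (\<lambda>i. if i < n then restrict x {..<n} i else 0)"
      using x by (auto simp: dual_code_def)
    moreover have "restrict x {..<n} \<in> PiE {..<n} (\<lambda>_. UNIV)" by simp
    ultimately show "x \<in> (\<lambda>f i. if i < n then f i else 0) ` (PiE {..<n} (\<lambda>_. UNIV :: bit set))"
      by blast
  qed
  moreover have "finite (PiE {..<n} (\<lambda>_. UNIV :: bit set))"
    by (intro finite_PiE) (auto simp: bit_UNIV)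
  ultimately show ?thesis by (meson finite_imageI finite_subset)
qed

lemma fail_witness:
  assumes "\<not> encodable n l k G0 G1 m c"
  shows "\<exists>x\<in>dual_code n l G0 - {\<lambda>_. 0}. \<forall>i<n. x i \<noteq> 0 \<longrightarrow> c i \<noteq> None"
proof -
  define R where "R = {i. i < n \<and> c i \<noteq> None}"
  define b where "b = (\<lambda>i. mat_vec G1 k m i + the (c i))"
  have fR: "finite R" by (simp add: R_def)
  from fredholm[OF fR, where l=l and A=G0 and b=b] show ?thesis
  proof
    assume "\<exists>d. \<forall>i\<in>R. (\<Sum>j<l. G0 i j * d j) = b i"
    then obtain d where d: "\<forall>i\<in>R. (\<Sum>j<l. G0 i j * d j) = b i" by auto
    have "encodable n l k G0 G1 m c"
      unfolding encodable_def
    proof (intro exI[of _ d] allI impI)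
      fix i s assume "i < n" "c i = Some s"
      then have "i \<in> R" by (simp add: R_def)
      then have "(\<Sum>j<l. G0 i j * d j) = b i" using d by blast
      then show "mat_vec G0 l d i = mat_vec G1 k m i + s"
        using \<open>c i = Some s\<close> by (simp add: b_def mat_vec_def)
    qed
    then show ?thesis using assms by blast
  next
    assume "\<exists>y. (\<forall>j<l. (\<Sum>i\<in>R. y i * G0 i j) = 0) \<and> (\<Sum>i\<in>R. y i * b i) \<noteq> 0"
    then obtain y where y: "\<forall>j<l. (\<Sum>i\<in>R. y i * G0 i j) = 0" "(\<Sum>i\<in>R. y i * b i) \<noteq> 0" by auto
    define x where "x = (\<lambda>i. if i \<in> R then y i else 0)"
    have sR: "(\<Sum>i<n. G0 i j * x i) = (\<Sum>i\<in>R. y i * G0 i j)" for j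
    proof -
      have "(\<Sum>i<n. G0 i j * x i) = (\<Sum>i<n. if i \<in> R then y i * G0 i j else 0)"
        by (rule sum.cong) (auto simp: x_def mult.commute)
      also have "\<dots> = (\<Sum>i\<in>{i\<in>{..<n}. i \<in> R}. y i * G0 i j)"
        by (rule sum.inter_filter[symmetric]) simp
      also have "{i\<in>{..<n}. i \<in> R} = R" by (auto simp: R_def)
      finally show ?thesis .
    qed
    have xD: "x \<in> dual_code n l G0"
    proof -
      have "\<forall>i. n \<le> i \<longrightarrow> x i = 0" by (auto simp: x_def R_def)
      moreover have "\<forall>j<l. (\<Sum>i<n. G0 i j * x i) = 0" using y(1) by (simp only: sR)
      ultimately show ?thesis unfolding dual_code_def by blast
    qed
    have "x \<noteq> (\<lambda>_. 0)"
    proof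
      assume "x = (\<lambda>_. 0)"
      then have "\<forall>i\<in>R. y i = 0" unfolding x_def by (metis (mono_tags))
      then have "(\<Sum>i\<in>R. y i * b i) = 0" by simp
      then show False using y(2) by simp
    qed
    moreover have "\<forall>i<n. x i \<noteq> 0 \<longrightarrow> c i \<noteq> None" by (auto simp: x_def R_def)
    ultimately show ?thesis using xD by blast
  qed
qed

lemma bitopt_UNIV: "(UNIV :: bit option set) = {None, Some 0, Some 1}"
proof -
  have "v \<in> {None, Some 0, Some 1}" for v :: "bit option"
    by (cases v) auto
  then show ?thesis by blast
qed

lemma prob_sum:
  "(\<Sum>c\<in>configs n. if (\<forall>i<n. x i \<noteq> 0 \<longrightarrow> c i \<noteq> None) then config_prob \<beta> n c else 0)
     = \<beta> ^ hweight n x"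
proof -
  define f where "f = (\<lambda>i (v::bit option). case v of None \<Rightarrow> (if x i \<noteq> 0 then 0 else 1 - \<beta>) | Some _ \<Rightarrow> \<beta> / 2)"
  have pc: "(if (\<forall>i<n. x i \<noteq> 0 \<longrightarrow> c i \<noteq> None) then config_prob \<beta> n c else 0) = (\<Prod>i<n. f i (c i))" for c
  proof (cases "\<forall>i<n. x i \<noteq> 0 \<longrightarrow> c i \<noteq> None")
    case True
    then have "(\<Prod>i<n. f i (c i)) = config_prob \<beta> n c"
      unfolding config_prob_def f_def by (intro prod.cong) (auto split: option.split)
    then show ?thesis using True by simp
  next
    case False
    then obtain i where "i < n" "x i \<noteq> 0" "c i = None" by auto
    then have z: "(\<Prod>i<n. f i (c i)) = 0"
      by (intro prod_zero) (auto simp: f_def intro!: bexI[of _ i])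
    show ?thesis unfolding if_not_P[OF False] using z by simp
  qed
  have "(\<Sum>c\<in>configs n. if (\<forall>i<n. x i \<noteq> 0 \<longrightarrow> c i \<noteq> None) then config_prob \<beta> n c else 0)
      = (\<Sum>c\<in>PiE {..<n} (\<lambda>_. UNIV). \<Prod>i<n. f i (c i))"
    unfolding configs_def using pc by simp
  also have "\<dots> = (\<Prod>i<n. \<Sum>v\<in>UNIV. f i v)"
    by (rule prod_sum_PiE[symmetric]) (auto simp: bitopt_UNIV)
  also have "\<dots> = (\<Prod>i<n. if x i \<noteq> 0 then \<beta> else 1)"
    by (intro prod.cong) (auto simp: bitopt_UNIV f_def)
  also have "\<dots> = \<beta> ^ card ({..<n} \<inter> {i. x i \<noteq> 0})"
    by (simp add: prod.If_cases)
  also have "{..<n} \<inter> {i. x i \<noteq> 0} = {i. i < n \<and> x i \<noteq> 0}" by auto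
  finally show ?thesis by (simp add: hweight_def)
qed

lemma binom_sum:
  fixes \<beta> :: real
  assumes "w \<le> n"
  shows "(\<Sum>u=w..n. \<beta>^u * (1-\<beta>)^(n-u) * real ((n-w) choose (u-w))) = \<beta>^w"
proof -
  have "{w..n} = (+) w ` {..n-w}" using assms
    by (simp add: atLeast0AtMost[symmetric] image_add_atLeastAtMost add.commute)
  then have "(\<Sum>u=w..n. \<beta>^u * (1-\<beta>)^(n-u) * real ((n-w) choose (u-w)))
      = (\<Sum>t\<le>n-w. \<beta>^(w+t) * (1-\<beta>)^(n-(w+t)) * real ((n-w) choose t))"
    by (simp add: sum.reindex)
  also have "\<dots> = \<beta>^w * (\<Sum>t\<le>n-w. real ((n-w) choose t) * \<beta>^t * (1-\<beta>)^((n-w)-t))"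
    by (simp add: sum_distrib_left power_add algebra_simps)
  also have "\<dots> = \<beta>^w * (\<beta> + (1-\<beta>))^(n-w)"
    by (simp only: binomial_ring)
  finally show ?thesis by simp
qed

lemma rhs_eq:
  fixes \<beta> :: real and B :: "nat \<Rightarrow> nat"
  shows "(\<Sum>u=a..n. \<beta>^u * (1-\<beta>)^(n-u) * (\<Sum>w=a..u. real (B w) * real ((n-w) choose (u-w))))
       = (\<Sum>w=a..n. real (B w) * \<beta>^w)"
proof -
  define g where "g = (\<lambda>u w. \<beta>^u * (1-\<beta>)^(n-u) * (real (B w) * real ((n-w) choose (u-w))))"
  have "(\<Sum>u=a..n. \<beta>^u * (1-\<beta>)^(n-u) * (\<Sum>w=a..u. real (B w) * real ((n-w) choose (u-w))))
      = (\<Sum>u\<in>{a..n}. \<Sum>w\<in>{w. w \<in> {a..n} \<and> w \<le> u}. g u w)"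
  proof (rule sum.cong)
    fix u assume "u \<in> {a..n}"
    then have "{w. w \<in> {a..n} \<and> w \<le> u} = {a..u}" by auto
    then show "\<beta>^u * (1-\<beta>)^(n-u) * (\<Sum>w=a..u. real (B w) * real ((n-w) choose (u-w)))
      = (\<Sum>w\<in>{w. w \<in> {a..n} \<and> w \<le> u}. g u w)"
      by (simp add: g_def sum_distrib_left)
  qed simp
  also have "\<dots> = (\<Sum>w\<in>{a..n}. \<Sum>u\<in>{u. u \<in> {a..n} \<and> w \<le> u}. g u w)"
    by (rule sum.swap_restrict) auto
  also have "\<dots> = (\<Sum>w\<in>{a..n}. real (B w) * \<beta>^w)"
  proof (rule sum.cong)
    fix w assume w: "w \<in> {a..n}"
    then have "{u. u \<in> {a..n} \<and> w \<le> u} = {w..n}" by auto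
    then have "(\<Sum>u\<in>{u. u \<in> {a..n} \<and> w \<le> u}. g u w)
        = real (B w) * (\<Sum>u=w..n. \<beta>^u * (1-\<beta>)^(n-u) * real ((n-w) choose (u-w)))"
      by (simp add: g_def sum_distrib_left algebra_simps)
    also have "\<dots> = real (B w) * \<beta>^w" using w by (simp add: binom_sum)
    finally show "(\<Sum>u\<in>{u. u \<in> {a..n} \<and> w \<le> u}. g u w) = real (B w) * \<beta>^w" .
  qed simp
  finally show ?thesis .
qed

lemma config_prob_nonneg:
  fixes \<beta> :: real
  assumes "0 < \<beta>" "\<beta> < 1"
  shows "config_prob \<beta> n c \<ge> 0"
  unfolding config_prob_def using assms by (intro prod_nonneg) (auto split: option.split)

lemma hweight_le: "hweight n x \<le> n"
proof -
  have "card {i. i < n \<and> x i \<noteq> 0} \<le> card {..<n}" by (rule card_mono) auto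
  then show ?thesis by (simp add: hweight_def)
qed

theorem corollary1:
  fixes \<beta> :: real and n l k :: nat
    and G0 G1 :: "nat \<Rightarrow> nat \<Rightarrow> bit" and m :: "nat \<Rightarrow> bit"
  assumes "0 < \<beta>" and "\<beta> < 1"
  shows "fail_prob \<beta> n l k G0 G1 m \<le>
    (\<Sum>u = min_dist n l G0..n. \<beta> ^ u * (1 - \<beta>) ^ (n - u) *
       (\<Sum>w = min_dist n l G0..u. real (weight_count n l G0 w) * real ((n - w) choose (u - w))))"
proof -
  define D where "D = dual_code n l G0"
  define D' where "D' = D - {\<lambda>_. 0}"
  define ok where "ok = (\<lambda>(c::nat\<Rightarrow>bit option) (x::nat\<Rightarrow>bit). \<forall>i<n. x i \<noteq> 0 \<longrightarrow> c i \<noteq> None)"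
  define d0 where "d0 = min_dist n l G0"
  have fD: "finite D" using finite_dual by (simp add: D_def)
  have fD': "finite D'" using fD by (simp add: D'_def)
  note cpn = config_prob_nonneg[OF assms]
  have "fail_prob \<beta> n l k G0 G1 m \<le> (\<Sum>c\<in>configs n. \<Sum>x\<in>D'. if ok c x then config_prob \<beta> n c else 0)"
    unfolding fail_prob_def
  proof (rule sum_mono)
    fix c assume "c \<in> configs n"
    show "(if encodable n l k G0 G1 m c then 0 else config_prob \<beta> n c)
        \<le> (\<Sum>x\<in>D'. if ok c x then config_prob \<beta> n c else 0)"
    proof (cases "encodable n l k G0 G1 m c")
      case True then show ?thesis by (simp add: sum_nonneg cpn)
    next
      case False
      then obtain x where x: "x \<in> D'" "ok c x"
        using fail_witness[OF False] by (auto simp: D'_def D_def ok_def)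
      have "(if ok c x then config_prob \<beta> n c else 0) \<le> (\<Sum>x\<in>D'. if ok c x then config_prob \<beta> n c else 0)"
        by (rule member_le_sum) (auto simp: cpn fD' x)
      then show ?thesis using False x by simp
    qed
  qed
  also have "\<dots> = (\<Sum>x\<in>D'. \<beta> ^ hweight n x)"
    by (subst sum.swap) (rule sum.cong, simp, unfold ok_def, rule prob_sum)
  also have "\<dots> = (\<Sum>w\<in>{..n}. \<Sum>x\<in>{x. x \<in> D' \<and> hweight n x = w}. \<beta> ^ hweight n x)"
    by (rule sum.group[symmetric]) (auto simp: fD' hweight_le)
  also have "\<dots> = (\<Sum>w\<in>{..n}. real (card {x. x \<in> D' \<and> hweight n x = w}) * \<beta>^w)"
    by (rule sum.cong) auto
  also have "\<dots> \<le> (\<Sum>w=d0..n. real (weight_count n l G0 w) * \<beta>^w)"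
  proof -
    have low: "d0 \<le> hweight n x" if "x \<in> D'" for x
    proof -
      have "hweight n x \<in> {hweight n x | x. x \<in> dual_code n l G0 \<and> x \<noteq> (\<lambda>_. 0)}"
        using that by (auto simp: D'_def D_def)
      then show ?thesis unfolding d0_def min_dist_def by (rule cInf_lower) simp
    qed
    have "(\<Sum>w\<in>{..n}. real (card {x. x \<in> D' \<and> hweight n x = w}) * \<beta>^w)
        = (\<Sum>w\<in>{..n}. if d0 \<le> w then real (card {x. x \<in> D' \<and> hweight n x = w}) * \<beta>^w else 0)"
    proof (rule sum.cong)
      fix w assume "w \<in> {..n}"
      show "real (card {x. x \<in> D' \<and> hweight n x = w}) * \<beta>^w
          = (if d0 \<le> w then real (card {x. x \<in> D' \<and> hweight n x = w}) * \<beta>^w else 0)"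
      proof (cases "d0 \<le> w")
        case False
        then have "{x. x \<in> D' \<and> hweight n x = w} = {}" using low by force
        then have "card {x. x \<in> D' \<and> hweight n x = w} = 0" by (simp only: card.empty)
        then show ?thesis using False by simp
      qed simp
    qed simp
    also have "\<dots> = (\<Sum>w\<in>{w\<in>{..n}. d0 \<le> w}. real (card {x. x \<in> D' \<and> hweight n x = w}) * \<beta>^w)"
      by (rule sum.inter_filter[symmetric]) simp
    also have "{w\<in>{..n}. d0 \<le> w} = {d0..n}" by auto
    also have "(\<Sum>w\<in>{d0..n}. real (card {x. x \<in> D' \<and> hweight n x = w}) * \<beta>^w)
        \<le> (\<Sum>w=d0..n. real (weight_count n l G0 w) * \<beta>^w)"
    proof (rule sum_mono)
      fix w
      have "card {x. x \<in> D' \<and> hweight n x = w} \<le> weight_count n l G0 w"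
        unfolding weight_count_def
        by (rule card_mono) (use fD in \<open>auto simp: D_def D'_def\<close>)
      then show "real (card {x. x \<in> D' \<and> hweight n x = w}) * \<beta>^w \<le> real (weight_count n l G0 w) * \<beta>^w"
        using assms by (intro mult_right_mono) auto
    qed
    finally show ?thesis .
  qed
  also have "\<dots> = (\<Sum>u = min_dist n l G0..n. \<beta> ^ u * (1 - \<beta>) ^ (n - u) *
       (\<Sum>w = min_dist n l G0..u. real (weight_count n l G0 w) * real ((n - w) choose (u - w))))"
    unfolding d0_def by (rule rhs_eq[symmetric])
  finally show ?thesis .
qed

end
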